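(* With the emerging metric on finite residue rings described in the context, the finite rings $\mathbb{Z}/n\mathbb{Z}$ locally approximate the real numbers: $\mathsf{lm}^{\mathrm{loc}}\,\mathrm{K}_n=\mathbb{R}$. That is, the relation $\approx$ on $\mathrm{K}_{/\mathfrak{l}}$ is compatible with the ring operations of $\mathrm{K}$, and the quotient $\mathrm{K}_{/\mathfrak{l}}/\!\approx$ with the induced operations and metric is isomorphic to $(\mathbb{R},+,\cdot)$ with the metric $|x-y|$.
   Context: Let $\mathcal{D}$ be a non-principal ultrafilter on $\mathbb{N}$ containing the set of primes, ${}^*\mathbb{Z}=\mathbb{Z}^{\mathbb{N}}/\mathcal{D}$, and $\mathfrak{q}\in{}^*\mathbb{Z}$ the class of $(q)_{q\in\mathbb{N}}$; let $\mathrm{F}={}^*\mathbb{Z}/\mathfrak{q}\,{}^*\mathbb{Z}\cong\prod_{\mathcal{D}}\mathbb{Z}/q\mathbb{Z}$. Assume there is a model ${}^f\mathbb{Z}$ of arithmetic with $\mathbb{Z}\prec{}^f\mathbb{Z}\prec{}^*\mathbb{Z}$ such that $\mathfrak{q}>k$ for all $k\in{}^f\mathbb{Z}$, and let $\mathfrak{l}\in{}^f\mathbb{Z}$ be a positive infinite integer (so $\mathfrak{l}^n<\mathfrak{q}$ for all $n\in\mathbb{N}$). Let $\mathcal{N}\in{}^*\mathbb{Z}$, $\mathcal{N}\ge\mathfrak{q}$, be the class of a sequence of positive integers $(n_j)_j$ with $\mathfrak{q}\mid\mathcal{N}$, and $\mathrm{K}={}^*\mathbb{Z}/\mathcal{N}\,{}^*\mathbb{Z}\cong\prod_{\mathcal{D}}\mathbb{Z}/n_j\mathbb{Z}$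 (the rings $\mathrm{K}_n=\mathbb{Z}/n\mathbb{Z}$); let $s:\mathrm{K}\to\mathrm{F}$ be reduction mod $\mathfrak{q}$. On $\mathrm{F}$: for $m\in\mathbb{N}$ let $Z(m)=\{k\in{}^*\mathbb{Z}:|k|<\mathfrak{l}^m\}$ (embedded in $\mathrm{F}$ by reduction), $S_m(\mathrm{F})=\{z\in\mathrm{F}:\exists k_1,k_2\in Z(m),k_2\neq0,\ z=k_1k_2^{-1},\ |k_1|/|k_2|\le m\}$, $\mathrm{F}_{/\mathfrak{l}}=\bigcup_m S_m(\mathrm{F})$, $\|z\|=\mathrm{st}(|k_1|/|k_2|)$ for the minimal such pair, $\mathsf{d}_F(z_1,z_2)=\|z_1-z_2\|$. On $\mathrm{K}$: $\mathrm{K}_{/\mathfrak{l}}=s^{-1}(\mathrm{F}_{/\mathfrak{l}})$ and $\mathsf{d}_K(x,y)=\mathsf{d}_F(s(x),s(y))$. Define $x\approx y$ iff $\mathsf{d}_K(x,y)\le1/n$ for all $n\in\mathbb{N}$. The local ultraproduct of the $\mathrm{K}_n$ is $\mathrm{K}_{/\mathfrak{l}}/\!\approx$ with induced operations and metric. *)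

theory Defs
  imports Complex_Main "HOL-Computational_Algebra.Primes" "HOL-Number_Theory.Cong"
begin

text \<open>Ultrapowers over nat are represented by sequences (representatives);
  a property holds in the ultrapower iff the set of indices where it holds lies in D.\<close>

definition nonprincipal_ultrafilter :: "nat set set \<Rightarrow> bool" where
  "nonprincipal_ultrafilter D \<longleftrightarrow>
     UNIV \<in> D \<and> {} \<notin> D \<and>
     (\<forall>A B. A \<in> D \<and> A \<subseteq> B \<longrightarrow> B \<in> D) \<and>
     (\<forall>A B. A \<in> D \<and> B \<in> D \<longrightarrow> A \<inter> B \<in> D) \<and>
     (\<forall>A. A \<in> D \<or> - A \<in> D) \<and>
     (\<forall>A. finite A \<longrightarrow> A \<notin> D)"

definition ae :: "nat set set \<Rightarrow> (nat \<Rightarrow> bool) \<Rightarrow> bool" where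
  "ae D P \<longleftrightarrow> {j. P j} \<in> D"

definition Zset :: "nat set set \<Rightarrow> (nat \<Rightarrow> int) \<Rightarrow> nat \<Rightarrow> (nat \<Rightarrow> int) set" where
  "Zset D l m = {k. ae D (\<lambda>j. \<bar>k j\<bar> < l j ^ m)}"

text \<open>z (an element of F = *Z / q *Z, q = class of (j)_j) equals k1 * k2^(-1) with
  k1, k2 in Z(m), k2 nonzero, and |k1|/|k2| <= m.\<close>
definition quot_rep :: "nat set set \<Rightarrow> (nat \<Rightarrow> int) \<Rightarrow> nat \<Rightarrow> (nat \<Rightarrow> int)
    \<Rightarrow> (nat \<Rightarrow> int) \<Rightarrow> (nat \<Rightarrow> int) \<Rightarrow> bool" where
  "quot_rep D l m z k1 k2 \<longleftrightarrow>
     k1 \<in> Zset D l m \<and> k2 \<in> Zset D l m \<and> \<not> ae D (\<lambda>j. k2 j = 0) \<and>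
     ae D (\<lambda>j. [z j * k2 j = k1 j] (mod int j)) \<and>
     ae D (\<lambda>j. \<bar>k1 j\<bar> \<le> int m * \<bar>k2 j\<bar>)"

definition Sm :: "nat set set \<Rightarrow> (nat \<Rightarrow> int) \<Rightarrow> nat \<Rightarrow> (nat \<Rightarrow> int) set" where
  "Sm D l m = {z. \<exists>k1 k2. quot_rep D l m z k1 k2}"

definition Fl :: "nat set set \<Rightarrow> (nat \<Rightarrow> int) \<Rightarrow> (nat \<Rightarrow> int) set" where
  "Fl D l = (\<Union>m. Sm D l m)"

definition is_st :: "nat set set \<Rightarrow> (nat \<Rightarrow> real) \<Rightarrow> real \<Rightarrow> bool" where
  "is_st D r a \<longleftrightarrow> (\<forall>\<epsilon>>0. ae D (\<lambda>j. \<bar>r j - a\<bar> < \<epsilon>))"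

definition fnorm :: "nat set set \<Rightarrow> (nat \<Rightarrow> int) \<Rightarrow> (nat \<Rightarrow> int) \<Rightarrow> real" where
  "fnorm D l z = (SOME a. \<exists>m k1 k2. quot_rep D l m z k1 k2 \<and>
       is_st D (\<lambda>j. \<bar>real_of_int (k1 j)\<bar> / \<bar>real_of_int (k2 j)\<bar>) a)"

definition dF :: "nat set set \<Rightarrow> (nat \<Rightarrow> int) \<Rightarrow> (nat \<Rightarrow> int) \<Rightarrow> (nat \<Rightarrow> int) \<Rightarrow> real" where
  "dF D l z1 z2 = fnorm D l (\<lambda>j. z1 j - z2 j)"

text \<open>K = *Z / N *Z, elements represented by sequences of residues 0 <= x j < N j\<close>
definition Kcar :: "(nat \<Rightarrow> nat) \<Rightarrow> (nat \<Rightarrow> int) set" where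
  "Kcar N = {x. \<forall>j. 0 \<le> x j \<and> x j < int (N j)}"

definition addK :: "(nat \<Rightarrow> nat) \<Rightarrow> (nat \<Rightarrow> int) \<Rightarrow> (nat \<Rightarrow> int) \<Rightarrow> (nat \<Rightarrow> int)" where
  "addK N x y = (\<lambda>j. (x j + y j) mod int (N j))"

definition mulK :: "(nat \<Rightarrow> nat) \<Rightarrow> (nat \<Rightarrow> int) \<Rightarrow> (nat \<Rightarrow> int) \<Rightarrow> (nat \<Rightarrow> int)" where
  "mulK N x y = (\<lambda>j. (x j * y j) mod int (N j))"

definition negK :: "(nat \<Rightarrow> nat) \<Rightarrow> (nat \<Rightarrow> int) \<Rightarrow> (nat \<Rightarrow> int)" where
  "negK N x = (\<lambda>j. (- x j) mod int (N j))"

definition oneK :: "(nat \<Rightarrow> nat) \<Rightarrow> (nat \<Rightarrow> int)" where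
  "oneK N = (\<lambda>j. 1 mod int (N j))"

definition red_q :: "(nat \<Rightarrow> int) \<Rightarrow> (nat \<Rightarrow> int)" where
  "red_q x = (\<lambda>j. x j mod int j)"

definition Kl :: "nat set set \<Rightarrow> (nat \<Rightarrow> int) \<Rightarrow> (nat \<Rightarrow> nat) \<Rightarrow> (nat \<Rightarrow> int) set" where
  "Kl D l N = {x \<in> Kcar N. red_q x \<in> Fl D l}"

definition dK :: "nat set set \<Rightarrow> (nat \<Rightarrow> int) \<Rightarrow> (nat \<Rightarrow> int) \<Rightarrow> (nat \<Rightarrow> int) \<Rightarrow> real" where
  "dK D l x y = dF D l (red_q x) (red_q y)"

definition approx :: "nat set set \<Rightarrow> (nat \<Rightarrow> int) \<Rightarrow> (nat \<Rightarrow> int) \<Rightarrow> (nat \<Rightarrow> int) \<Rightarrow> bool" where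
  "approx D l x y \<longleftrightarrow> (\<forall>n::nat. n > 0 \<longrightarrow> dK D l x y \<le> 1 / real n)"

definition approx_rel :: "nat set set \<Rightarrow> (nat \<Rightarrow> int) \<Rightarrow> (nat \<Rightarrow> nat) \<Rightarrow> ((nat \<Rightarrow> int) \<times> (nat \<Rightarrow> int)) set" where
  "approx_rel D l N = {(x, y). x \<in> Kl D l N \<and> y \<in> Kl D l N \<and> approx D l x y}"

end

theory Submission
  imports Defs
begin


locale ctx =
  fixes D :: "nat set set" and l :: "nat \<Rightarrow> int" and N :: "nat \<Rightarrow> nat"
  assumes U: "nonprincipal_ultrafilter D"
    and P: "{p. prime p} \<in> D"
    and L1: "\<forall>k::int. ae D (\<lambda>j. k < l j)"
    and L2: "\<forall>n::nat. ae D (\<lambda>j. l j ^ n < int j)"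
    and N1: "\<forall>j. 0 < N j"
    and N2: "ae D (\<lambda>j. j \<le> N j)"
    and N3: "ae D (\<lambda>j. j dvd N j)"
begin

lemma ae_mono: "ae D P \<Longrightarrow> (\<And>j. P j \<Longrightarrow> Q j) \<Longrightarrow> ae D Q"
  using U unfolding nonprincipal_ultrafilter_def ae_def
  by (metis (mono_tags, lifting) mem_Collect_eq subsetI)

lemma ae_conj: "ae D P \<Longrightarrow> ae D Q \<Longrightarrow> ae D (\<lambda>j. P j \<and> Q j)"
proof -
  assume a: "ae D P" "ae D Q"
  have "{j. P j \<and> Q j} = {j. P j} \<inter> {j. Q j}" by auto
  then show ?thesis using a U unfolding nonprincipal_ultrafilter_def ae_def by metis
qed

lemma ae_False: "\<not> ae D (\<lambda>j. False)"
  using U unfolding nonprincipal_ultrafilter_def ae_def by simp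

lemma ae_True: "ae D (\<lambda>j. True)"
  using U unfolding nonprincipal_ultrafilter_def ae_def by simp

lemma ae_neg: "\<not> ae D P \<Longrightarrow> ae D (\<lambda>j. \<not> P j)"
proof -
  assume a: "\<not> ae D P"
  have "- {j. P j} = {j. \<not> P j}" by auto
  then show ?thesis using a U unfolding nonprincipal_ultrafilter_def ae_def by metis
qed

lemma ae_prime: "ae D (\<lambda>j. prime j)"
  using P unfolding ae_def by simp

lemma ae_l: "ae D (\<lambda>j. k < l j)" using L1 by blast
lemma ae_pow: "ae D (\<lambda>j. l j ^ n < int j)" using L2 by blast

lemma ae_contr: "ae D P \<Longrightarrow> (\<And>j. P j \<Longrightarrow> False) \<Longrightarrow> False"
  using ae_mono ae_False by blast

lemma st_ae: "is_st D r a \<Longrightarrow> e > 0 \<Longrightarrow> ae D (\<lambda>j. \<bar>r j - a\<bar> < e)"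
  unfolding is_st_def by blast

lemma st_unique: assumes "is_st D r a" "is_st D r b" shows "a = b"
proof (rule ccontr)
  assume "a \<noteq> b"
  then have e: "\<bar>a - b\<bar> / 2 > 0" by simp
  have "ae D (\<lambda>j. \<bar>r j - a\<bar> < \<bar>a - b\<bar> / 2 \<and> \<bar>r j - b\<bar> < \<bar>a - b\<bar> / 2)"
    using assms e by (intro ae_conj st_ae) auto
  then show False
  proof (rule ae_contr)
    fix j assume "\<bar>r j - a\<bar> < \<bar>a - b\<bar> / 2 \<and> \<bar>r j - b\<bar> < \<bar>a - b\<bar> / 2"
    then show False by (smt (verit) field_sum_of_halves)
  qed
qed

lemma st_cong: assumes "is_st D r a" "ae D (\<lambda>j. r j = s j)" shows "is_st D s a"
  unfolding is_st_def
proof (intro allI impI)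
  fix e :: real assume "e > 0"
  then have "ae D (\<lambda>j. \<bar>r j - a\<bar> < e \<and> r j = s j)"
    using assms unfolding is_st_def by (intro ae_conj) auto
  then show "ae D (\<lambda>j. \<bar>s j - a\<bar> < e)" by (rule ae_mono) auto
qed

lemma st_const: "is_st D (\<lambda>j. c) c"
  unfolding is_st_def using ae_True by (auto intro: ae_mono)

lemma st_abs: assumes "is_st D r a" shows "is_st D (\<lambda>j. \<bar>r j\<bar>) \<bar>a\<bar>"
  unfolding is_st_def
proof (intro allI impI)
  fix e :: real assume "e > 0"
  then have "ae D (\<lambda>j. \<bar>r j - a\<bar> < e)" using assms unfolding is_st_def by auto
  then show "ae D (\<lambda>j. \<bar>\<bar>r j\<bar> - \<bar>a\<bar>\<bar> < e)" by (rule ae_mono) linarith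
qed

lemma st_neg: assumes "is_st D r a" shows "is_st D (\<lambda>j. - r j) (- a)"
  unfolding is_st_def
proof (intro allI impI)
  fix e :: real assume "e > 0"
  then have "ae D (\<lambda>j. \<bar>r j - a\<bar> < e)" using assms unfolding is_st_def by auto
  then show "ae D (\<lambda>j. \<bar>- r j - - a\<bar> < e)" by (rule ae_mono) linarith
qed

lemma st_add: assumes "is_st D r a" "is_st D s b" shows "is_st D (\<lambda>j. r j + s j) (a + b)"
  unfolding is_st_def
proof (intro allI impI)
  fix e :: real assume e: "e > 0"
  then have "ae D (\<lambda>j. \<bar>r j - a\<bar> < e/2 \<and> \<bar>s j - b\<bar> < e/2)"
    using assms e by (intro ae_conj st_ae) auto
  then show "ae D (\<lambda>j. \<bar>r j + s j - (a + b)\<bar> < e)" by (rule ae_mono) linarith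
qed

lemma mul_est:
  fixes r s a b d :: real
  assumes "\<bar>r - a\<bar> < d" "\<bar>s - b\<bar> < d" "d \<le> 1" "0 < d"
  shows "\<bar>r * s - a * b\<bar> < d * (1 + \<bar>a\<bar> + \<bar>b\<bar>)"
proof -
  have eq: "r * s - a * b = (r - a) * (s - b) + a * (s - b) + b * (r - a)" by algebra
  have 1: "\<bar>(r - a) * (s - b)\<bar> < d"
  proof -
    have "\<bar>(r - a) * (s - b)\<bar> = \<bar>r - a\<bar> * \<bar>s - b\<bar>" by (simp add: abs_mult)
    also have "\<dots> \<le> \<bar>r - a\<bar> * 1" using assms by (intro mult_left_mono) auto
    also have "\<dots> < d" using assms by simp
    finally show ?thesis .
  qed
  have 2: "\<bar>a * (s - b)\<bar> \<le> \<bar>a\<bar> * d"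
    using assms by (simp add: abs_mult mult_left_mono)
  have 3: "\<bar>b * (r - a)\<bar> \<le> \<bar>b\<bar> * d"
    using assms by (simp add: abs_mult mult_left_mono)
  have "\<bar>r * s - a * b\<bar> \<le> \<bar>(r - a) * (s - b)\<bar> + \<bar>a * (s - b)\<bar> + \<bar>b * (r - a)\<bar>"
    unfolding eq by (meson abs_triangle_ineq add_mono order_trans order_refl)
  then show ?thesis using 1 2 3 by (simp add: algebra_simps)
qed

lemma st_mul: assumes "is_st D r a" "is_st D s b" shows "is_st D (\<lambda>j. r j * s j) (a * b)"
  unfolding is_st_def
proof (intro allI impI)
  fix e :: real assume e: "e > 0"
  define d where "d = min 1 (e / (1 + \<bar>a\<bar> + \<bar>b\<bar>))"
  have d: "0 < d" "d \<le> 1" "d * (1 + \<bar>a\<bar> + \<bar>b\<bar>) \<le> e"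
  proof -
    have p: "0 < 1 + \<bar>a\<bar> + \<bar>b\<bar>" by simp
    show "0 < d" "d \<le> 1" using e p unfolding d_def by auto
    have "d \<le> e / (1 + \<bar>a\<bar> + \<bar>b\<bar>)" unfolding d_def by simp
    then show "d * (1 + \<bar>a\<bar> + \<bar>b\<bar>) \<le> e" using p by (simp add: pos_le_divide_eq)
  qed
  then have "ae D (\<lambda>j. \<bar>r j - a\<bar> < d \<and> \<bar>s j - b\<bar> < d)"
    using assms by (intro ae_conj st_ae) auto
  then show "ae D (\<lambda>j. \<bar>r j * s j - a * b\<bar> < e)"
  proof (rule ae_mono)
    fix j assume "\<bar>r j - a\<bar> < d \<and> \<bar>s j - b\<bar> < d"
    then have "\<bar>r j * s j - a * b\<bar> < d * (1 + \<bar>a\<bar> + \<bar>b\<bar>)" using d by (intro mul_est) auto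
    then show "\<bar>r j * s j - a * b\<bar> < e" using d by linarith
  qed
qed

lemma st_exists: assumes B: "ae D (\<lambda>j. \<bar>r j\<bar> \<le> B)" shows "\<exists>a. is_st D r a"
proof -
  define S where "S = {t. ae D (\<lambda>j. t < r j)}"
  have ne: "- B - 1 \<in> S" unfolding S_def mem_Collect_eq by (rule ae_mono[OF B]) linarith
  have ub: "t \<le> B" if "t \<in> S" for t
  proof (rule ccontr)
    assume "\<not> t \<le> B"
    have "ae D (\<lambda>j. t < r j \<and> \<bar>r j\<bar> \<le> B)" using that B unfolding S_def by (intro ae_conj) auto
    then show False by (rule ae_contr) (use \<open>\<not> t \<le> B\<close> in linarith)
  qed
  have bdd: "bdd_above S" using ub by (metis bdd_aboveI)
  define a where "a = Sup S"
  have "is_st D r a" unfolding is_st_def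
  proof (intro allI impI)
    fix e :: real assume e: "e > 0"
    have "a - e < Sup S" unfolding a_def using e by simp
    then obtain t where t: "t \<in> S" "a - e < t" using less_cSup_iff[of S "a - e"] ne bdd by blast
    have 1: "ae D (\<lambda>j. a - e < r j)" using t unfolding S_def by (auto elim: ae_mono)
    have 2: "ae D (\<lambda>j. r j < a + e)"
    proof (rule ccontr)
      assume "\<not> ae D (\<lambda>j. r j < a + e)"
      then have "ae D (\<lambda>j. \<not> r j < a + e)" by (rule ae_neg)
      then have "a + e/2 \<in> S" unfolding S_def mem_Collect_eq by (rule ae_mono) (use e in linarith)
      then have "a + e/2 \<le> a" unfolding a_def using bdd by (rule cSup_upper)
      then show False using e by linarith
    qed
    have "ae D (\<lambda>j. a - e < r j \<and> r j < a + e)" using 1 2 by (rule ae_conj)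
    then show "ae D (\<lambda>j. \<bar>r j - a\<bar> < e)" by (rule ae_mono) linarith
  qed
  then show ?thesis by blast
qed

end



lemma prod_bound:
  fixes a b L :: int
  assumes "\<bar>a\<bar> < L ^ m" "\<bar>b\<bar> < L ^ n"
  shows "\<bar>a * b\<bar> < L ^ (m + n)"
proof -
  have "\<bar>a * b\<bar> = \<bar>a\<bar> * \<bar>b\<bar>" by (simp add: abs_mult)
  also have "\<dots> < L ^ m * L ^ n"
    using assms by (intro mult_strict_mono) auto
  finally show ?thesis by (simp add: power_add)
qed

lemma pow_mono_L:
  fixes L :: int
  assumes "2 \<le> L" "m \<le> n" "x < L ^ m"
  shows "x < L ^ n"
  using assms power_increasing[of m n L] by linarith

lemma sum_bound:
  fixes x y L :: int
  assumes L: "2 \<le> L" and "\<bar>x\<bar> < L ^ K" "\<bar>y\<bar> < L ^ K"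
  shows "\<bar>x + y\<bar> < L ^ (K + 1)" "\<bar>x - y\<bar> < L ^ (K + 1)"
proof -
  have "2 * L ^ K \<le> L * L ^ K" using L by (intro mult_right_mono) auto
  then have 2: "2 * L ^ K \<le> L ^ (K + 1)" by simp
  show "\<bar>x + y\<bar> < L ^ (K + 1)" using assms 2 by linarith
  show "\<bar>x - y\<bar> < L ^ (K + 1)" using assms 2 by linarith
qed

lemma uniq_pt:
  fixes L a b c d z :: int and j :: nat
  assumes L: "2 \<le> L" and j: "L ^ (m1 + m2 + 1) < int j"
    and "\<bar>a\<bar> < L ^ m1" "\<bar>b\<bar> < L ^ m1" "\<bar>c\<bar> < L ^ m2" "\<bar>d\<bar> < L ^ m2"
    and c1: "[z * b = a] (mod int j)" and c2: "[z * d = c] (mod int j)"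
  shows "a * d = c * b"
proof -
  have "[a * d = z * b * d] (mod int j)" using c1 by (simp add: cong_sym cong_scalar_right)
  moreover have "[z * b * d = c * b] (mod int j)"
    using cong_scalar_right[OF c2, of b] by (simp add: mult.commute mult.left_commute)
  ultimately have "[a * d = c * b] (mod int j)" by (rule cong_trans)
  then have dv: "int j dvd (a * d - c * b)" by (simp add: cong_iff_dvd_diff)
  have "\<bar>a * d\<bar> < L ^ (m1 + m2)" using assms by (intro prod_bound) auto
  moreover have "\<bar>c * b\<bar> < L ^ (m1 + m2)" using assms prod_bound[of c L m2 b m1] by (simp add: add.commute)
  ultimately have "\<bar>a * d - c * b\<bar> < L ^ (m1 + m2 + 1)" by (rule sum_bound(2)[OF L])
  then have "\<bar>a * d - c * b\<bar> < int j" using j by linarith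
  then show ?thesis
  proof -
    assume lt: "\<bar>a * d - c * b\<bar> < int j"
    show ?thesis
    proof (rule ccontr)
      assume "a * d \<noteq> c * b"
      then have "\<bar>int j\<bar> \<le> \<bar>a * d - c * b\<bar>" using dv dvd_imp_le_int[of "a * d - c * b" "int j"] by simp
      then show False using lt by simp
    qed
  qed
qed

lemma ratio_bound:
  fixes a b :: int
  assumes "\<bar>a\<bar> \<le> int m * \<bar>b\<bar>" "b \<noteq> 0"
  shows "\<bar>real_of_int a / real_of_int b\<bar> \<le> real m"
proof -
  have "\<bar>real_of_int a\<bar> \<le> real m * \<bar>real_of_int b\<bar>"
  proof -
    have "real_of_int \<bar>a\<bar> \<le> real_of_int (int m * \<bar>b\<bar>)" using assms(1) by (simp only: of_int_le_iff)
    then show ?thesis by simp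
  qed
  then show ?thesis using assms(2) by (simp add: abs_divide divide_le_eq)
qed




definition rat :: "(nat \<Rightarrow> int) \<Rightarrow> (nat \<Rightarrow> int) \<Rightarrow> nat \<Rightarrow> real" where
  "rat a b = (\<lambda>j. real_of_int (a j) / real_of_int (b j))"

context ctx begin

definition Rep where "Rep z a b \<longleftrightarrow> (\<exists>m. quot_rep D l m z a b)"

lemma ae_l2: "ae D (\<lambda>j. 2 \<le> l j)"
  using ae_l[of 1] by (rule ae_mono) simp

lemma Rep_D:
  assumes "Rep z a b"
  obtains m where "ae D (\<lambda>j. \<bar>a j\<bar> < l j ^ m \<and> \<bar>b j\<bar> < l j ^ m \<and> b j \<noteq> 0 \<and>
     [z j * b j = a j] (mod int j) \<and> \<bar>a j\<bar> \<le> int m * \<bar>b j\<bar>)"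
proof -
  obtain m where q: "quot_rep D l m z a b" using assms unfolding Rep_def by blast
  have "ae D (\<lambda>j. \<not> b j = 0)" using q unfolding quot_rep_def by (intro ae_neg) blast
  then have "ae D (\<lambda>j. \<bar>a j\<bar> < l j ^ m \<and> \<bar>b j\<bar> < l j ^ m \<and> b j \<noteq> 0 \<and>
     [z j * b j = a j] (mod int j) \<and> \<bar>a j\<bar> \<le> int m * \<bar>b j\<bar>)"
    using q unfolding quot_rep_def Zset_def mem_Collect_eq by (intro ae_conj) auto
  then show ?thesis using that by blast
qed

lemma RepI:
  assumes "ae D (\<lambda>j. \<bar>a j\<bar> < l j ^ m \<and> \<bar>b j\<bar> < l j ^ m \<and> b j \<noteq> 0 \<and>
     [z j * b j = a j] (mod int j) \<and> \<bar>a j\<bar> \<le> int m * \<bar>b j\<bar>)"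
  shows "Rep z a b"
proof -
  have "quot_rep D l m z a b" unfolding quot_rep_def Zset_def mem_Collect_eq
  proof (intro conjI)
    show "ae D (\<lambda>j. \<bar>a j\<bar> < l j ^ m)" by (rule ae_mono[OF assms]) auto
    show "ae D (\<lambda>j. \<bar>b j\<bar> < l j ^ m)" by (rule ae_mono[OF assms]) auto
    show "ae D (\<lambda>j. [z j * b j = a j] (mod int j))" by (rule ae_mono[OF assms]) auto
    show "ae D (\<lambda>j. \<bar>a j\<bar> \<le> int m * \<bar>b j\<bar>)" by (rule ae_mono[OF assms]) auto
    show "\<not> ae D (\<lambda>j. b j = 0)"
    proof
      assume "ae D (\<lambda>j. b j = 0)"
      with assms have "ae D (\<lambda>j. b j = 0 \<and> b j \<noteq> 0)" by (intro ae_conj) (auto elim: ae_mono)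
      then show False by (rule ae_contr) auto
    qed
  qed
  then show ?thesis unfolding Rep_def by blast
qed

lemma Rep_nz: "Rep z a b \<Longrightarrow> ae D (\<lambda>j. b j \<noteq> 0)"
  by (erule Rep_D) (erule ae_mono, blast)

lemma Rep_st: assumes "Rep z a b" shows "\<exists>v. is_st D (rat a b) v"
proof -
  obtain m where m: "ae D (\<lambda>j. \<bar>a j\<bar> < l j ^ m \<and> \<bar>b j\<bar> < l j ^ m \<and> b j \<noteq> 0 \<and>
     [z j * b j = a j] (mod int j) \<and> \<bar>a j\<bar> \<le> int m * \<bar>b j\<bar>)" using assms by (rule Rep_D)
  have "ae D (\<lambda>j. \<bar>rat a b j\<bar> \<le> real m)"
    by (rule ae_mono[OF m]) (unfold rat_def, intro ratio_bound, auto)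
  then show ?thesis by (rule st_exists)
qed

lemma Rep_uniq:
  assumes "Rep z a b" "Rep z c d"
  shows "ae D (\<lambda>j. rat a b j = rat c d j)"
proof -
  obtain m1 where m1: "ae D (\<lambda>j. \<bar>a j\<bar> < l j ^ m1 \<and> \<bar>b j\<bar> < l j ^ m1 \<and> b j \<noteq> 0 \<and>
     [z j * b j = a j] (mod int j) \<and> \<bar>a j\<bar> \<le> int m1 * \<bar>b j\<bar>)" using assms(1) by (rule Rep_D)
  obtain m2 where m2: "ae D (\<lambda>j. \<bar>c j\<bar> < l j ^ m2 \<and> \<bar>d j\<bar> < l j ^ m2 \<and> d j \<noteq> 0 \<and>
     [z j * d j = c j] (mod int j) \<and> \<bar>c j\<bar> \<le> int m2 * \<bar>d j\<bar>)" using assms(2) by (rule Rep_D)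
  have "ae D (\<lambda>j. (\<bar>a j\<bar> < l j ^ m1 \<and> \<bar>b j\<bar> < l j ^ m1 \<and> b j \<noteq> 0 \<and>
     [z j * b j = a j] (mod int j) \<and> \<bar>a j\<bar> \<le> int m1 * \<bar>b j\<bar>) \<and>
     (\<bar>c j\<bar> < l j ^ m2 \<and> \<bar>d j\<bar> < l j ^ m2 \<and> d j \<noteq> 0 \<and>
     [z j * d j = c j] (mod int j) \<and> \<bar>c j\<bar> \<le> int m2 * \<bar>d j\<bar>) \<and> 2 \<le> l j \<and>
     l j ^ (m1 + m2 + 1) < int j)"
    by (intro ae_conj m1 m2 ae_l2 ae_pow)
  then show ?thesis
  proof (rule ae_mono)
    fix j assume h: "(\<bar>a j\<bar> < l j ^ m1 \<and> \<bar>b j\<bar> < l j ^ m1 \<and> b j \<noteq> 0 \<and>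
     [z j * b j = a j] (mod int j) \<and> \<bar>a j\<bar> \<le> int m1 * \<bar>b j\<bar>) \<and>
     (\<bar>c j\<bar> < l j ^ m2 \<and> \<bar>d j\<bar> < l j ^ m2 \<and> d j \<noteq> 0 \<and>
     [z j * d j = c j] (mod int j) \<and> \<bar>c j\<bar> \<le> int m2 * \<bar>d j\<bar>) \<and> 2 \<le> l j \<and>
     l j ^ (m1 + m2 + 1) < int j"
    then have e: "a j * d j = c j * b j" by (intro uniq_pt[of "l j" m1 m2 j _ _ _ _ "z j"]) auto
    have "real_of_int (a j) * real_of_int (d j) = real_of_int (c j) * real_of_int (b j)"
      using e by (metis of_int_mult)
    then show "rat a b j = rat c d j" using h unfolding rat_def by (simp add: field_simps)
  qed
qed

definition Val where "Val z = (THE v. \<exists>a b. Rep z a b \<and> is_st D (rat a b) v)"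

lemma Val_eq: assumes "Rep z a b" "is_st D (rat a b) v" shows "Val z = v"
  unfolding Val_def
proof (rule the_equality)
  show "\<exists>a b. Rep z a b \<and> is_st D (rat a b) v" using assms by blast
  fix w assume "\<exists>a b. Rep z a b \<and> is_st D (rat a b) w"
  then obtain c d where cd: "Rep z c d" "is_st D (rat c d) w" by blast
  have "is_st D (rat a b) w" using st_cong[OF cd(2)] Rep_uniq[OF cd(1) assms(1)] by blast
  then show "w = v" using assms(2) by (rule st_unique)
qed

lemma fnorm_eq: assumes "Rep z a b" "is_st D (rat a b) v" shows "fnorm D l z = \<bar>v\<bar>"
proof -
  have ab: "\<And>c d. (\<lambda>j. \<bar>real_of_int (c j)\<bar> / \<bar>real_of_int (d j)\<bar>) = (\<lambda>j. \<bar>rat c d j\<bar>)"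
    unfolding rat_def by (simp add: abs_divide)
  show ?thesis unfolding fnorm_def ab
  proof (rule some_equality)
    show "\<exists>m k1 k2. quot_rep D l m z k1 k2 \<and> is_st D (\<lambda>j. \<bar>rat k1 k2 j\<bar>) \<bar>v\<bar>"
      using assms st_abs unfolding Rep_def by blast
    fix w assume "\<exists>m k1 k2. quot_rep D l m z k1 k2 \<and> is_st D (\<lambda>j. \<bar>rat k1 k2 j\<bar>) w"
    then obtain c d where cd: "Rep z c d" "is_st D (\<lambda>j. \<bar>rat c d j\<bar>) w" unfolding Rep_def by blast
    have "ae D (\<lambda>j. \<bar>rat c d j\<bar> = \<bar>rat a b j\<bar>)" using Rep_uniq[OF cd(1) assms(1)] by (rule ae_mono) simp
    then have "is_st D (\<lambda>j. \<bar>rat a b j\<bar>) w" by (rule st_cong[OF cd(2)])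
    then show "w = \<bar>v\<bar>" using st_abs[OF assms(2)] by (rule st_unique)
  qed
qed

end



lemma add_pt:
  fixes L a b c d z1 z2 :: int and j :: nat
  assumes L: "2 \<le> L"
    and h1: "\<bar>a\<bar> < L ^ m1" "\<bar>b\<bar> < L ^ m1" "b \<noteq> 0" "[z1 * b = a] (mod int j)" "\<bar>a\<bar> \<le> int m1 * \<bar>b\<bar>"
    and h2: "\<bar>c\<bar> < L ^ m2" "\<bar>d\<bar> < L ^ m2" "d \<noteq> 0" "[z2 * d = c] (mod int j)" "\<bar>c\<bar> \<le> int m2 * \<bar>d\<bar>"
  shows "\<bar>a * d + c * b\<bar> < L ^ (m1 + m2 + 1) \<and> \<bar>b * d\<bar> < L ^ (m1 + m2 + 1) \<and> b * d \<noteq> 0 \<and>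
     [(z1 + z2) * (b * d) = a * d + c * b] (mod int j) \<and>
     \<bar>a * d + c * b\<bar> \<le> int (m1 + m2 + 1) * \<bar>b * d\<bar>"
proof (intro conjI)
  have p1: "\<bar>a * d\<bar> < L ^ (m1 + m2)" using h1 h2 by (intro prod_bound) auto
  have p2: "\<bar>c * b\<bar> < L ^ (m1 + m2)" using h1 h2 prod_bound[of c L m2 b m1] by (simp add: add.commute)
  show "\<bar>a * d + c * b\<bar> < L ^ (m1 + m2 + 1)" using p1 p2 by (rule sum_bound(1)[OF L])
  have "\<bar>b * d\<bar> < L ^ (m1 + m2)" using h1 h2 by (intro prod_bound) auto
  then show "\<bar>b * d\<bar> < L ^ (m1 + m2 + 1)" by (rule pow_mono_L[OF L, rotated]) simp
  show "b * d \<noteq> 0" using h1 h2 by simp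
  have "[z1 * b * d + z2 * d * b = a * d + c * b] (mod int j)"
    using h1(4) h2(4) by (intro cong_add cong_scalar_right)
  then show "[(z1 + z2) * (b * d) = a * d + c * b] (mod int j)" by (simp add: algebra_simps)
  have "\<bar>a * d + c * b\<bar> \<le> \<bar>a\<bar> * \<bar>d\<bar> + \<bar>c\<bar> * \<bar>b\<bar>" by (metis abs_mult abs_triangle_ineq)
  also have "\<dots> \<le> (int m1 * \<bar>b\<bar>) * \<bar>d\<bar> + (int m2 * \<bar>d\<bar>) * \<bar>b\<bar>"
    using h1 h2 by (intro add_mono mult_right_mono) auto
  also have "\<dots> = int (m1 + m2) * \<bar>b * d\<bar>" by (simp add: abs_mult algebra_simps)
  also have "\<dots> \<le> int (m1 + m2 + 1) * \<bar>b * d\<bar>" by (intro mult_right_mono) auto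
  finally show "\<bar>a * d + c * b\<bar> \<le> int (m1 + m2 + 1) * \<bar>b * d\<bar>" .
qed

lemma mul_pt:
  fixes L a b c d z1 z2 :: int and j :: nat
  assumes L: "2 \<le> L"
    and h1: "\<bar>a\<bar> < L ^ m1" "\<bar>b\<bar> < L ^ m1" "b \<noteq> 0" "[z1 * b = a] (mod int j)" "\<bar>a\<bar> \<le> int m1 * \<bar>b\<bar>"
    and h2: "\<bar>c\<bar> < L ^ m2" "\<bar>d\<bar> < L ^ m2" "d \<noteq> 0" "[z2 * d = c] (mod int j)" "\<bar>c\<bar> \<le> int m2 * \<bar>d\<bar>"
  shows "\<bar>a * c\<bar> < L ^ (m1 * m2 + m1 + m2) \<and> \<bar>b * d\<bar> < L ^ (m1 * m2 + m1 + m2) \<and> b * d \<noteq> 0 \<and>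
     [(z1 * z2) * (b * d) = a * c] (mod int j) \<and>
     \<bar>a * c\<bar> \<le> int (m1 * m2 + m1 + m2) * \<bar>b * d\<bar>"
proof (intro conjI)
  have "\<bar>a * c\<bar> < L ^ (m1 + m2)" using h1 h2 by (intro prod_bound) auto
  then show "\<bar>a * c\<bar> < L ^ (m1 * m2 + m1 + m2)" by (rule pow_mono_L[OF L, rotated]) simp
  have "\<bar>b * d\<bar> < L ^ (m1 + m2)" using h1 h2 by (intro prod_bound) auto
  then show "\<bar>b * d\<bar> < L ^ (m1 * m2 + m1 + m2)" by (rule pow_mono_L[OF L, rotated]) simp
  show "b * d \<noteq> 0" using h1 h2 by simp
  have "[(z1 * b) * (z2 * d) = a * c] (mod int j)"
    using h1(4) h2(4) by (rule cong_mult)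
  then show "[(z1 * z2) * (b * d) = a * c] (mod int j)" by (simp add: algebra_simps)
  have "\<bar>a * c\<bar> = \<bar>a\<bar> * \<bar>c\<bar>" by (simp add: abs_mult)
  also have "\<dots> \<le> (int m1 * \<bar>b\<bar>) * (int m2 * \<bar>d\<bar>)"
    using h1 h2 by (intro mult_mono) auto
  also have "\<dots> = int (m1 * m2) * \<bar>b * d\<bar>" by (simp add: abs_mult algebra_simps)
  also have "\<dots> \<le> int (m1 * m2 + m1 + m2) * \<bar>b * d\<bar>" by (intro mult_right_mono) auto
  finally show "\<bar>a * c\<bar> \<le> int (m1 * m2 + m1 + m2) * \<bar>b * d\<bar>" .
qed

context ctx begin

lemma Rep_add:
  assumes "Rep z1 a b" "Rep z2 c d"
  shows "Rep (\<lambda>j. z1 j + z2 j) (\<lambda>j. a j * d j + c j * b j) (\<lambda>j. b j * d j)"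
proof -
  obtain m1 where m1: "ae D (\<lambda>j. \<bar>a j\<bar> < l j ^ m1 \<and> \<bar>b j\<bar> < l j ^ m1 \<and> b j \<noteq> 0 \<and>
     [z1 j * b j = a j] (mod int j) \<and> \<bar>a j\<bar> \<le> int m1 * \<bar>b j\<bar>)" using assms(1) by (rule Rep_D)
  obtain m2 where m2: "ae D (\<lambda>j. \<bar>c j\<bar> < l j ^ m2 \<and> \<bar>d j\<bar> < l j ^ m2 \<and> d j \<noteq> 0 \<and>
     [z2 j * d j = c j] (mod int j) \<and> \<bar>c j\<bar> \<le> int m2 * \<bar>d j\<bar>)" using assms(2) by (rule Rep_D)
  have "ae D (\<lambda>j. (\<bar>a j\<bar> < l j ^ m1 \<and> \<bar>b j\<bar> < l j ^ m1 \<and> b j \<noteq> 0 \<and>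
     [z1 j * b j = a j] (mod int j) \<and> \<bar>a j\<bar> \<le> int m1 * \<bar>b j\<bar>) \<and>
     (\<bar>c j\<bar> < l j ^ m2 \<and> \<bar>d j\<bar> < l j ^ m2 \<and> d j \<noteq> 0 \<and>
     [z2 j * d j = c j] (mod int j) \<and> \<bar>c j\<bar> \<le> int m2 * \<bar>d j\<bar>) \<and> 2 \<le> l j)"
    by (intro ae_conj m1 m2 ae_l2)
  then have "ae D (\<lambda>j. \<bar>a j * d j + c j * b j\<bar> < l j ^ (m1 + m2 + 1) \<and> \<bar>b j * d j\<bar> < l j ^ (m1 + m2 + 1) \<and> b j * d j \<noteq> 0 \<and>
     [(z1 j + z2 j) * (b j * d j) = a j * d j + c j * b j] (mod int j) \<and>
     \<bar>a j * d j + c j * b j\<bar> \<le> int (m1 + m2 + 1) * \<bar>b j * d j\<bar>)"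
    by (rule ae_mono) (intro add_pt, auto)
  then show ?thesis by (rule RepI)
qed

lemma Rep_mul:
  assumes "Rep z1 a b" "Rep z2 c d"
  shows "Rep (\<lambda>j. z1 j * z2 j) (\<lambda>j. a j * c j) (\<lambda>j. b j * d j)"
proof -
  obtain m1 where m1: "ae D (\<lambda>j. \<bar>a j\<bar> < l j ^ m1 \<and> \<bar>b j\<bar> < l j ^ m1 \<and> b j \<noteq> 0 \<and>
     [z1 j * b j = a j] (mod int j) \<and> \<bar>a j\<bar> \<le> int m1 * \<bar>b j\<bar>)" using assms(1) by (rule Rep_D)
  obtain m2 where m2: "ae D (\<lambda>j. \<bar>c j\<bar> < l j ^ m2 \<and> \<bar>d j\<bar> < l j ^ m2 \<and> d j \<noteq> 0 \<and>
     [z2 j * d j = c j] (mod int j) \<and> \<bar>c j\<bar> \<le> int m2 * \<bar>d j\<bar>)" using assms(2) by (rule Rep_D)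
  have "ae D (\<lambda>j. (\<bar>a j\<bar> < l j ^ m1 \<and> \<bar>b j\<bar> < l j ^ m1 \<and> b j \<noteq> 0 \<and>
     [z1 j * b j = a j] (mod int j) \<and> \<bar>a j\<bar> \<le> int m1 * \<bar>b j\<bar>) \<and>
     (\<bar>c j\<bar> < l j ^ m2 \<and> \<bar>d j\<bar> < l j ^ m2 \<and> d j \<noteq> 0 \<and>
     [z2 j * d j = c j] (mod int j) \<and> \<bar>c j\<bar> \<le> int m2 * \<bar>d j\<bar>) \<and> 2 \<le> l j)"
    by (intro ae_conj m1 m2 ae_l2)
  then have "ae D (\<lambda>j. \<bar>a j * c j\<bar> < l j ^ (m1 * m2 + m1 + m2) \<and> \<bar>b j * d j\<bar> < l j ^ (m1 * m2 + m1 + m2) \<and> b j * d j \<noteq> 0 \<and>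
     [(z1 j * z2 j) * (b j * d j) = a j * c j] (mod int j) \<and>
     \<bar>a j * c j\<bar> \<le> int (m1 * m2 + m1 + m2) * \<bar>b j * d j\<bar>)"
    by (rule ae_mono) (intro mul_pt, auto)
  then show ?thesis by (rule RepI)
qed

lemma Rep_neg:
  assumes "Rep z a b"
  shows "Rep (\<lambda>j. - z j) (\<lambda>j. - a j) b"
proof -
  obtain m where m: "ae D (\<lambda>j. \<bar>a j\<bar> < l j ^ m \<and> \<bar>b j\<bar> < l j ^ m \<and> b j \<noteq> 0 \<and>
     [z j * b j = a j] (mod int j) \<and> \<bar>a j\<bar> \<le> int m * \<bar>b j\<bar>)" using assms by (rule Rep_D)
  have "ae D (\<lambda>j. \<bar>- a j\<bar> < l j ^ m \<and> \<bar>b j\<bar> < l j ^ m \<and> b j \<noteq> 0 \<and>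
     [(- z j) * b j = - a j] (mod int j) \<and> \<bar>- a j\<bar> \<le> int m * \<bar>b j\<bar>)"
    by (rule ae_mono[OF m]) (auto simp: cong_minus_minus_iff)
  then show ?thesis by (rule RepI)
qed

lemma Rep_cong:
  assumes "Rep z a b" "ae D (\<lambda>j. z' j mod int j = z j mod int j)"
  shows "Rep z' a b"
proof -
  obtain m where m: "ae D (\<lambda>j. \<bar>a j\<bar> < l j ^ m \<and> \<bar>b j\<bar> < l j ^ m \<and> b j \<noteq> 0 \<and>
     [z j * b j = a j] (mod int j) \<and> \<bar>a j\<bar> \<le> int m * \<bar>b j\<bar>)" using assms(1) by (rule Rep_D)
  have "ae D (\<lambda>j. (\<bar>a j\<bar> < l j ^ m \<and> \<bar>b j\<bar> < l j ^ m \<and> b j \<noteq> 0 \<and>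
     [z j * b j = a j] (mod int j) \<and> \<bar>a j\<bar> \<le> int m * \<bar>b j\<bar>) \<and> z' j mod int j = z j mod int j)"
    by (intro ae_conj m assms(2))
  then have "ae D (\<lambda>j. \<bar>a j\<bar> < l j ^ m \<and> \<bar>b j\<bar> < l j ^ m \<and> b j \<noteq> 0 \<and>
     [z' j * b j = a j] (mod int j) \<and> \<bar>a j\<bar> \<le> int m * \<bar>b j\<bar>)"
  proof (rule ae_mono)
    fix j assume h: "(\<bar>a j\<bar> < l j ^ m \<and> \<bar>b j\<bar> < l j ^ m \<and> b j \<noteq> 0 \<and>
     [z j * b j = a j] (mod int j) \<and> \<bar>a j\<bar> \<le> int m * \<bar>b j\<bar>) \<and> z' j mod int j = z j mod int j"
    then have "[z' j = z j] (mod int j)" by (simp add: cong_def)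
    then have "[z' j * b j = z j * b j] (mod int j)" by (rule cong_scalar_right)
    then have "[z' j * b j = a j] (mod int j)" using h cong_trans by blast
    then show "\<bar>a j\<bar> < l j ^ m \<and> \<bar>b j\<bar> < l j ^ m \<and> b j \<noteq> 0 \<and>
     [z' j * b j = a j] (mod int j) \<and> \<bar>a j\<bar> \<le> int m * \<bar>b j\<bar>" using h by blast
  qed
  then show ?thesis by (rule RepI)
qed

lemma Rep_one: "Rep (\<lambda>j. 1) (\<lambda>j. 1) (\<lambda>j. 1)"
proof (rule RepI[where m = 1])
  show "ae D (\<lambda>j. \<bar>1::int\<bar> < l j ^ 1 \<and> \<bar>1::int\<bar> < l j ^ 1 \<and> (1::int) \<noteq> 0 \<and>
     [1 * 1 = (1::int)] (mod int j) \<and> \<bar>1::int\<bar> \<le> int 1 * \<bar>1\<bar>)"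
    by (rule ae_mono[OF ae_l2]) auto
qed

lemma rat_add: "ae D (\<lambda>j. b j \<noteq> 0) \<Longrightarrow> ae D (\<lambda>j. d j \<noteq> 0) \<Longrightarrow>
  ae D (\<lambda>j. rat a b j + rat c d j = rat (\<lambda>j. a j * d j + c j * b j) (\<lambda>j. b j * d j) j)"
  by (drule (1) ae_conj, erule ae_mono) (simp add: rat_def field_simps)

lemma rat_mul: "rat (\<lambda>j. a j * c j) (\<lambda>j. b j * d j) = (\<lambda>j. rat a b j * rat c d j)"
  by (simp add: rat_def fun_eq_iff)

lemma rat_neg: "rat (\<lambda>j. - a j) b = (\<lambda>j. - rat a b j)"
  by (simp add: rat_def fun_eq_iff)

end



context ctx begin

definition V where "V x = Val (red_q x)"

lemma Kl_iff: "x \<in> Kl D l N \<longleftrightarrow> x \<in> Kcar N \<and> (\<exists>a b. Rep (red_q x) a b)"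
  unfolding Kl_def Fl_def Sm_def Rep_def by blast

lemma Kl_V: assumes "x \<in> Kl D l N" obtains a b where "Rep (red_q x) a b" "is_st D (rat a b) (V x)"
proof -
  obtain a b where r: "Rep (red_q x) a b" using assms Kl_iff by blast
  obtain v where v: "is_st D (rat a b) v" using Rep_st[OF r] by blast
  have "V x = v" unfolding V_def using Val_eq[OF r v] .
  then show ?thesis using that r v by blast
qed

lemma Kcar_mod: "(\<lambda>j. f j mod int (N j)) \<in> Kcar N"
  unfolding Kcar_def using N1 by simp

lemma modN: "ae D (\<lambda>j. f j mod int (N j) mod int j = f j mod int j)"
  by (rule ae_mono[OF N3]) (simp add: mod_mod_cancel)

lemma red_add: "ae D (\<lambda>j. red_q (addK N x y) j mod int j = (red_q x j + red_q y j) mod int j)"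
  unfolding red_q_def addK_def by (rule ae_mono[OF modN]) (simp add: mod_add_eq)

lemma red_mul: "ae D (\<lambda>j. red_q (mulK N x y) j mod int j = (red_q x j * red_q y j) mod int j)"
  unfolding red_q_def mulK_def by (rule ae_mono[OF modN]) (simp add: mod_mult_eq)

lemma red_neg: "ae D (\<lambda>j. red_q (negK N x) j mod int j = (- red_q x j) mod int j)"
  unfolding red_q_def negK_def by (rule ae_mono[OF modN]) (simp add: mod_minus_eq)

lemma red_one: "ae D (\<lambda>j. red_q (oneK N) j mod int j = 1 mod int j)"
  unfolding red_q_def oneK_def by (rule ae_mono[OF modN]) simp

lemma add_ok: assumes "x \<in> Kl D l N" "y \<in> Kl D l N"
  shows "addK N x y \<in> Kl D l N \<and> V (addK N x y) = V x + V y"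
proof -
  obtain a b where x: "Rep (red_q x) a b" "is_st D (rat a b) (V x)" using Kl_V[OF assms(1)] .
  obtain c d where y: "Rep (red_q y) c d" "is_st D (rat c d) (V y)" using Kl_V[OF assms(2)] .
  have r: "Rep (red_q (addK N x y)) (\<lambda>j. a j * d j + c j * b j) (\<lambda>j. b j * d j)"
    using Rep_add[OF x(1) y(1)] red_add by (rule Rep_cong)
  have s: "is_st D (rat (\<lambda>j. a j * d j + c j * b j) (\<lambda>j. b j * d j)) (V x + V y)"
    using st_add[OF x(2) y(2)] rat_add[OF Rep_nz[OF x(1)] Rep_nz[OF y(1)]] by (rule st_cong)
  have "addK N x y \<in> Kl D l N" unfolding Kl_iff using r Kcar_mod[of "\<lambda>j. x j + y j"] unfolding addK_def by blast
  moreover have "V (addK N x y) = V x + V y" using Val_eq[OF r s] unfolding V_def .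
  ultimately show ?thesis by blast
qed

lemma mul_ok: assumes "x \<in> Kl D l N" "y \<in> Kl D l N"
  shows "mulK N x y \<in> Kl D l N \<and> V (mulK N x y) = V x * V y"
proof -
  obtain a b where x: "Rep (red_q x) a b" "is_st D (rat a b) (V x)" using Kl_V[OF assms(1)] .
  obtain c d where y: "Rep (red_q y) c d" "is_st D (rat c d) (V y)" using Kl_V[OF assms(2)] .
  have r: "Rep (red_q (mulK N x y)) (\<lambda>j. a j * c j) (\<lambda>j. b j * d j)"
    using Rep_mul[OF x(1) y(1)] red_mul by (rule Rep_cong)
  have s: "is_st D (rat (\<lambda>j. a j * c j) (\<lambda>j. b j * d j)) (V x * V y)"
    unfolding rat_mul using st_mul[OF x(2) y(2)] .
  have "mulK N x y \<in> Kl D l N" unfolding Kl_iff using r Kcar_mod[of "\<lambda>j. x j * y j"] unfolding mulK_def by blast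
  moreover have "V (mulK N x y) = V x * V y" using Val_eq[OF r s] unfolding V_def .
  ultimately show ?thesis by blast
qed

lemma neg_ok: assumes "x \<in> Kl D l N"
  shows "negK N x \<in> Kl D l N \<and> V (negK N x) = - V x"
proof -
  obtain a b where x: "Rep (red_q x) a b" "is_st D (rat a b) (V x)" using Kl_V[OF assms(1)] .
  have r: "Rep (red_q (negK N x)) (\<lambda>j. - a j) b"
    using Rep_neg[OF x(1)] red_neg by (rule Rep_cong)
  have s: "is_st D (rat (\<lambda>j. - a j) b) (- V x)"
    unfolding rat_neg using st_neg[OF x(2)] .
  have "negK N x \<in> Kl D l N" unfolding Kl_iff using r Kcar_mod[of "\<lambda>j. - x j"] unfolding negK_def by blast
  moreover have "V (negK N x) = - V x" using Val_eq[OF r s] unfolding V_def .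
  ultimately show ?thesis by blast
qed

lemma one_ok: "oneK N \<in> Kl D l N \<and> V (oneK N) = 1"
proof -
  have r: "Rep (red_q (oneK N)) (\<lambda>j. 1) (\<lambda>j. 1)"
    using Rep_one red_one by (rule Rep_cong)
  have s: "is_st D (rat (\<lambda>j. 1) (\<lambda>j. 1)) 1"
    unfolding rat_def using st_const[of 1] by simp
  have "oneK N \<in> Kl D l N" unfolding Kl_iff using r Kcar_mod[of "\<lambda>j. 1"] unfolding oneK_def by blast
  moreover have "V (oneK N) = 1" using Val_eq[OF r s] unfolding V_def .
  ultimately show ?thesis by blast
qed

lemma dK_ok: assumes "x \<in> Kl D l N" "y \<in> Kl D l N"
  shows "dK D l x y = \<bar>V x - V y\<bar>"
proof -
  obtain a b where x: "Rep (red_q x) a b" "is_st D (rat a b) (V x)" using Kl_V[OF assms(1)] .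
  obtain c d where y: "Rep (red_q y) c d" "is_st D (rat c d) (V y)" using Kl_V[OF assms(2)] .
  have r0: "Rep (\<lambda>j. red_q x j + - red_q y j) (\<lambda>j. a j * d j + - c j * b j) (\<lambda>j. b j * d j)"
    using Rep_add[OF x(1) Rep_neg[OF y(1)]] by simp
  have r: "Rep (\<lambda>j. red_q x j - red_q y j) (\<lambda>j. a j * d j + - c j * b j) (\<lambda>j. b j * d j)"
    using r0 by simp
  have s0: "is_st D (\<lambda>j. rat a b j + rat (\<lambda>j. - c j) d j) (V x + - V y)"
    using st_add[OF x(2) st_neg[OF y(2)]] unfolding rat_neg .
  have s: "is_st D (rat (\<lambda>j. a j * d j + - c j * b j) (\<lambda>j. b j * d j)) (V x + - V y)"
    using s0 rat_add[OF Rep_nz[OF x(1)] Rep_nz[OF y(1)], of a "\<lambda>j. - c j"] by (rule st_cong)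
  have "dK D l x y = fnorm D l (\<lambda>j. red_q x j - red_q y j)" unfolding dK_def dF_def ..
  also have "\<dots> = \<bar>V x + - V y\<bar>" using fnorm_eq[OF r s] .
  finally show ?thesis by simp
qed

end



lemma floor_approx:
  fixes L :: int and r e :: real
  assumes "0 < L" "e > 0" "1 / e < real_of_int L"
  shows "\<bar>real_of_int \<lfloor>r * real_of_int L\<rfloor> / real_of_int L - r\<bar> < e"
proof -
  have L: "real_of_int L > 0" using assms by simp
  have f0: "real_of_int \<lfloor>r * real_of_int L\<rfloor> \<le> r * real_of_int L"
     "r * real_of_int L < real_of_int \<lfloor>r * real_of_int L\<rfloor> + 1"
    by (rule of_int_floor_le, rule real_of_int_floor_add_one_gt)
  have f: "\<bar>real_of_int \<lfloor>r * real_of_int L\<rfloor> - r * real_of_int L\<bar> < 1"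
    unfolding abs_less_iff using f0 by linarith
  have "real_of_int \<lfloor>r * real_of_int L\<rfloor> / real_of_int L - r
      = (real_of_int \<lfloor>r * real_of_int L\<rfloor> - r * real_of_int L) / real_of_int L"
    using L by (simp add: field_simps)
  then have "\<bar>real_of_int \<lfloor>r * real_of_int L\<rfloor> / real_of_int L - r\<bar>
      = \<bar>real_of_int \<lfloor>r * real_of_int L\<rfloor> - r * real_of_int L\<bar> / real_of_int L"
    using L by (simp add: abs_divide)
  also have "\<dots> < 1 / real_of_int L" using f L by (simp add: divide_strict_right_mono)
  also have "\<dots> < e" using assms L by (simp add: field_simps)
  finally show ?thesis .
qed

lemma floor_bound:
  fixes L :: int and r :: real and m :: nat
  assumes m: "m = nat \<lceil>\<bar>r\<bar>\<rceil> + 2" and L: "int m < L"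
  shows "\<bar>\<lfloor>r * real_of_int L\<rfloor>\<bar> < L ^ m \<and> \<bar>L\<bar> < L ^ m \<and> \<bar>\<lfloor>r * real_of_int L\<rfloor>\<bar> \<le> int m * \<bar>L\<bar>"
proof -
  have m2: "2 \<le> m" using m by simp
  have rm: "\<bar>r\<bar> + 1 \<le> real m" using m by linarith
  have Lp: "real_of_int L \<ge> 1" using L by linarith
  have "real_of_int \<bar>\<lfloor>r * real_of_int L\<rfloor>\<bar> \<le> \<bar>r\<bar> * real_of_int L + 1"
  proof -
    have "\<bar>r * real_of_int L\<bar> = \<bar>r\<bar> * real_of_int L" using Lp by (simp add: abs_mult)
    moreover have "real_of_int \<lfloor>r * real_of_int L\<rfloor> \<le> r * real_of_int L"
     "r * real_of_int L < real_of_int \<lfloor>r * real_of_int L\<rfloor> + 1"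
      by (rule of_int_floor_le, rule real_of_int_floor_add_one_gt)
    moreover have "\<bar>r\<bar> * real_of_int L \<ge> r * real_of_int L"
      using Lp by (simp_all add: mult_right_mono)
    moreover have "\<bar>r\<bar> * real_of_int L \<ge> - (r * real_of_int L)"
      using mult_right_mono[of "-r" "\<bar>r\<bar>" "real_of_int L"] Lp by simp
    ultimately show ?thesis unfolding of_int_abs abs_le_iff by linarith
  qed
  also have "\<dots> \<le> (\<bar>r\<bar> + 1) * real_of_int L" using Lp by (simp add: algebra_simps)
  also have "\<dots> \<le> real m * real_of_int L" using rm Lp by (intro mult_right_mono) auto
  finally have b: "real_of_int \<bar>\<lfloor>r * real_of_int L\<rfloor>\<bar> \<le> real_of_int (int m * L)" by simp
  then have b1: "\<bar>\<lfloor>r * real_of_int L\<rfloor>\<bar> \<le> int m * L" by (simp only: of_int_le_iff)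
  have "int m * L < L * L" using L by (intro mult_strict_right_mono) auto
  also have "L * L = L ^ 2" by (simp add: power2_eq_square)
  also have "\<dots> \<le> L ^ m" using m2 L by (intro power_increasing) auto
  finally have b2: "int m * L < L ^ m" .
  have "L < int m * L" using L m2 by simp
  then have "L < L ^ m" using b2 by linarith
  then have b3: "\<bar>L\<bar> < L ^ m" using L by simp
  show ?thesis using b1 b2 b3 L by simp
qed

context ctx begin

lemma surj_ok: "\<exists>x \<in> Kl D l N. V x = r"
proof -
  define m where "m = nat \<lceil>\<bar>r\<bar>\<rceil> + 2"
  define k where "k = (\<lambda>j. \<lfloor>r * real_of_int (l j)\<rfloor>)"
  define u where "u = (\<lambda>j. SOME v. [l j * v = 1] (mod int j))"
  define x where "x = (\<lambda>j. (k j * u j) mod int (N j))"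
  have "ae D (\<lambda>j. prime j \<and> int m < l j \<and> l j ^ 1 < int j \<and> j dvd N j)"
    by (intro ae_conj ae_prime ae_l ae_pow N3)
  then have "ae D (\<lambda>j. \<bar>k j\<bar> < l j ^ m \<and> \<bar>l j\<bar> < l j ^ m \<and> l j \<noteq> 0 \<and>
     [red_q x j * l j = k j] (mod int j) \<and> \<bar>k j\<bar> \<le> int m * \<bar>l j\<bar>)"
  proof (rule ae_mono)
    fix j assume h: "prime j \<and> int m < l j \<and> l j ^ 1 < int j \<and> j dvd N j"
    have fb: "\<bar>k j\<bar> < l j ^ m \<and> \<bar>l j\<bar> < l j ^ m \<and> \<bar>k j\<bar> \<le> int m * \<bar>l j\<bar>"
      unfolding k_def using floor_bound[OF m_def] h by blast
    have lpos: "0 < l j" using h by simp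
    have "\<not> int j dvd l j"
    proof
      assume "int j dvd l j"
      then have "int j \<le> l j" using lpos by (simp add: zdvd_imp_le)
      then show False using h by simp
    qed
    moreover have "prime (int j)" using h by simp
    ultimately have "coprime (int j) (l j)" by (rule prime_imp_coprime[rotated])
    then have "coprime (l j) (int j)" by (simp add: coprime_commute)
    then have "\<exists>v. [l j * v = 1] (mod int j)" by (rule cong_solve_coprime_int)
    then have uj: "[l j * u j = 1] (mod int j)" unfolding u_def by (rule someI_ex)
    have "red_q x j = (k j * u j) mod int (N j) mod int j" unfolding red_q_def x_def ..
    also have "\<dots> = (k j * u j) mod int j" using h by (simp add: mod_mod_cancel)
    finally have "[red_q x j = k j * u j] (mod int j)" by (simp add: cong_def)
    then have "[red_q x j * l j = k j * u j * l j] (mod int j)" by (rule cong_scalar_right)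
    moreover have "[k j * u j * l j = k j * 1] (mod int j)"
      using cong_scalar_left[OF uj, of "k j"] by (simp add: algebra_simps)
    ultimately have "[red_q x j * l j = k j] (mod int j)" using cong_trans by fastforce
    then show "\<bar>k j\<bar> < l j ^ m \<and> \<bar>l j\<bar> < l j ^ m \<and> l j \<noteq> 0 \<and>
     [red_q x j * l j = k j] (mod int j) \<and> \<bar>k j\<bar> \<le> int m * \<bar>l j\<bar>" using fb lpos by simp
  qed
  then have rep: "Rep (red_q x) k l" by (rule RepI)
  have st: "is_st D (rat k l) r" unfolding is_st_def
  proof (intro allI impI)
    fix e :: real assume e: "e > 0"
    have "ae D (\<lambda>j. \<lceil>1 / e\<rceil> < l j \<and> 0 < l j)" by (intro ae_conj ae_l)
    then show "ae D (\<lambda>j. \<bar>rat k l j - r\<bar> < e)"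
    proof (rule ae_mono)
      fix j assume h: "\<lceil>1 / e\<rceil> < l j \<and> 0 < l j"
      then have "1 / e < real_of_int (l j)" by linarith
      then show "\<bar>rat k l j - r\<bar> < e" unfolding rat_def k_def using h e by (intro floor_approx) auto
    qed
  qed
  have "x \<in> Kl D l N" unfolding Kl_iff using rep Kcar_mod[of "\<lambda>j. k j * u j"] unfolding x_def by blast
  moreover have "V x = r" using Val_eq[OF rep st] unfolding V_def .
  ultimately show ?thesis by blast
qed

end



context ctx begin

lemma approx_iff: assumes "x \<in> Kl D l N" "y \<in> Kl D l N"
  shows "approx D l x y \<longleftrightarrow> V x = V y"
proof
  assume a: "approx D l x y"
  show "V x = V y"
  proof (rule ccontr)
    assume "V x \<noteq> V y"
    then have d: "\<bar>V x - V y\<bar> > 0" by simp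
    then obtain n :: nat where n: "inverse (real (Suc n)) < \<bar>V x - V y\<bar>" using reals_Archimedean by blast
    have "dK D l x y \<le> 1 / real (Suc n)" using a unfolding approx_def by blast
    then show False using n dK_ok[OF assms] by (simp add: inverse_eq_divide)
  qed
next
  assume "V x = V y"
  then show "approx D l x y" unfolding approx_def using dK_ok[OF assms] by simp
qed

lemma rel_iff: "(x, y) \<in> approx_rel D l N \<longleftrightarrow> x \<in> Kl D l N \<and> y \<in> Kl D l N \<and> V x = V y"
  unfolding approx_rel_def using approx_iff by blast

lemma equiv_R: "equiv (Kl D l N) (approx_rel D l N)"
  unfolding equiv_def refl_on_def sym_def trans_def rel_iff
  by (auto simp: approx_rel_def)

lemma class_eq: "x \<in> Kl D l N \<Longrightarrow> approx_rel D l N `` {x} = {y \<in> Kl D l N. V y = V x}"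
  using rel_iff by auto

definition psi where "psi C = V (SOME x. x \<in> C)"

lemma psi_class: assumes "x \<in> Kl D l N" shows "psi (approx_rel D l N `` {x}) = V x"
proof -
  have ne: "\<exists>y. y \<in> approx_rel D l N `` {x}" using assms class_eq by auto
  have "(SOME y. y \<in> approx_rel D l N `` {x}) \<in> approx_rel D l N `` {x}" using ne by (rule someI_ex)
  then show ?thesis unfolding psi_def using class_eq[OF assms] by auto
qed

lemma psi_bij: "bij_betw psi (Kl D l N // approx_rel D l N) UNIV"
  unfolding bij_betw_def
proof
  show "inj_on psi (Kl D l N // approx_rel D l N)"
  proof (rule inj_onI)
    fix C1 C2 assume c1: "C1 \<in> Kl D l N // approx_rel D l N" and c2: "C2 \<in> Kl D l N // approx_rel D l N"
      and e: "psi C1 = psi C2"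
    obtain x where x: "x \<in> Kl D l N" "C1 = approx_rel D l N `` {x}" using c1 by (rule quotientE)
    obtain y where y: "y \<in> Kl D l N" "C2 = approx_rel D l N `` {y}" using c2 by (rule quotientE)
    have "V x = V y" using e x y psi_class by simp
    then show "C1 = C2" using x y class_eq by simp
  qed
  show "psi ` (Kl D l N // approx_rel D l N) = UNIV"
  proof (rule set_eqI, rule iffI)
    fix r :: real
    show "r \<in> UNIV" by simp
    assume "r \<in> UNIV"
    obtain x where x: "x \<in> Kl D l N" "V x = r" using surj_ok by blast
    then have "approx_rel D l N `` {x} \<in> Kl D l N // approx_rel D l N" by (intro quotientI)
    then show "r \<in> psi ` (Kl D l N // approx_rel D l N)" using psi_class[OF x(1)] x(2) by (metis image_eqI)
  qed
qed

end

theorem mainTheorem5: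
  fixes D :: "nat set set" and l :: "nat \<Rightarrow> int" and N :: "nat \<Rightarrow> nat"
  assumes "nonprincipal_ultrafilter D"
    and "{p. prime p} \<in> D"
    and "\<forall>k::int. ae D (\<lambda>j. k < l j)"
    and "\<forall>n::nat. ae D (\<lambda>j. l j ^ n < int j)"
    and "\<forall>j. 0 < N j"
    and "ae D (\<lambda>j. j \<le> N j)"
    and "ae D (\<lambda>j. j dvd N j)"
  shows "(\<forall>x\<in>Kl D l N. \<forall>y\<in>Kl D l N.
            addK N x y \<in> Kl D l N \<and> mulK N x y \<in> Kl D l N \<and> negK N x \<in> Kl D l N)
       \<and> oneK N \<in> Kl D l N
       \<and> equiv (Kl D l N) (approx_rel D l N)
       \<and> (\<forall>x\<in>Kl D l N. \<forall>x'\<in>Kl D l N. \<forall>y\<in>Kl D l N. \<forall>y'\<in>Kl D l N.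
            approx D l x x' \<and> approx D l y y' \<longrightarrow>
              approx D l (addK N x y) (addK N x' y') \<and>
              approx D l (mulK N x y) (mulK N x' y') \<and>
              approx D l (negK N x) (negK N x'))
       \<and> (\<exists>\<psi> :: (nat \<Rightarrow> int) set \<Rightarrow> real.
            bij_betw \<psi> (Kl D l N // approx_rel D l N) UNIV
          \<and> \<psi> (approx_rel D l N `` {oneK N}) = 1
          \<and> (\<forall>x\<in>Kl D l N. \<forall>y\<in>Kl D l N.
               \<psi> (approx_rel D l N `` {addK N x y}) =
                 \<psi> (approx_rel D l N `` {x}) + \<psi> (approx_rel D l N `` {y})
             \<and> \<psi> (approx_rel D l N `` {mulK N x y}) =
                 \<psi> (approx_rel D l N `` {x}) * \<psi> (approx_rel D l N `` {y})
             \<and> dK D l x y = \<bar>\<psi> (approx_rel D l N `` {x}) - \<psi> (approx_rel D l N `` {y})\<bar>))"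
proof -
  interpret ctx D l N using assms by unfold_locales
  show ?thesis
  proof (intro conjI)
    show "\<forall>x\<in>Kl D l N. \<forall>y\<in>Kl D l N.
            addK N x y \<in> Kl D l N \<and> mulK N x y \<in> Kl D l N \<and> negK N x \<in> Kl D l N"
      using add_ok mul_ok neg_ok by blast
    show "oneK N \<in> Kl D l N" using one_ok by blast
    show "equiv (Kl D l N) (approx_rel D l N)" by (rule equiv_R)
    show "\<forall>x\<in>Kl D l N. \<forall>x'\<in>Kl D l N. \<forall>y\<in>Kl D l N. \<forall>y'\<in>Kl D l N.
            approx D l x x' \<and> approx D l y y' \<longrightarrow>
              approx D l (addK N x y) (addK N x' y') \<and>
              approx D l (mulK N x y) (mulK N x' y') \<and>
              approx D l (negK N x) (negK N x')"
    proof (intro ballI impI)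
      fix x x' y y' assume k: "x \<in> Kl D l N" "x' \<in> Kl D l N" "y \<in> Kl D l N" "y' \<in> Kl D l N"
        and a: "approx D l x x' \<and> approx D l y y'"
      have e: "V x = V x'" "V y = V y'" using a approx_iff k by auto
      show "approx D l (addK N x y) (addK N x' y') \<and>
              approx D l (mulK N x y) (mulK N x' y') \<and>
              approx D l (negK N x) (negK N x')"
        using e k add_ok mul_ok neg_ok approx_iff by simp
    qed
    show "\<exists>\<psi> :: (nat \<Rightarrow> int) set \<Rightarrow> real.
            bij_betw \<psi> (Kl D l N // approx_rel D l N) UNIV
          \<and> \<psi> (approx_rel D l N `` {oneK N}) = 1
          \<and> (\<forall>x\<in>Kl D l N. \<forall>y\<in>Kl D l N.
               \<psi> (approx_rel D l N `` {addK N x y}) =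
                 \<psi> (approx_rel D l N `` {x}) + \<psi> (approx_rel D l N `` {y})
             \<and> \<psi> (approx_rel D l N `` {mulK N x y}) =
                 \<psi> (approx_rel D l N `` {x}) * \<psi> (approx_rel D l N `` {y})
             \<and> dK D l x y = \<bar>\<psi> (approx_rel D l N `` {x}) - \<psi> (approx_rel D l N `` {y})\<bar>)"
    proof (intro exI conjI ballI)
      show "bij_betw psi (Kl D l N // approx_rel D l N) UNIV" by (rule psi_bij)
      show "psi (approx_rel D l N `` {oneK N}) = 1" using one_ok psi_class by simp
      fix x y assume k: "x \<in> Kl D l N" "y \<in> Kl D l N"
      show "psi (approx_rel D l N `` {addK N x y}) =
                 psi (approx_rel D l N `` {x}) + psi (approx_rel D l N `` {y})"
        using k add_ok psi_class by simp
      show "psi (approx_rel D l N `` {mulK N x y}) =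
                 psi (approx_rel D l N `` {x}) * psi (approx_rel D l N `` {y})"
        using k mul_ok psi_class by simp
      show "dK D l x y = \<bar>psi (approx_rel D l N `` {x}) - psi (approx_rel D l N `` {y})\<bar>"
        using k dK_ok psi_class by simp
    qed
  qed
qed

end
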